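(* Let $r,s\in\mathrm{ri}(\Delta_N)$, let $I$ be a dual feasible basis of $(\mathrm{P}_{\mathrm{OT}})$ inducing the optimal transport coupling $\pi^\star=\pi(I,(r_\dagger,s))\ge0$, and let $J$ be the set of positions $j\in\{1,\dots,2N-1\}$ such that the $j$-th element of $I$ (in increasing order) is an index at which $\pi^\star$ vanishes. Define the closed convex cone $$H=\bigcap_{j\in J}\big\{v\in\mathbb{R}^{2N-1}:[A_{\dagger I}^{-1}v]_j\ge0\big\}.$$ Then $\mathbb P(G\in\partial H)=0$, where $G=(G^1,G^2)$ with $G^1,G^2$ independent as defined below.
   Context: $\Delta_N=\{r\in\mathbb{R}^N:r_i\ge0,\sum r_i=1\}$, $\mathrm{ri}(\Delta_N)$ those with all $r_i>0$. Reduced OT: vectorize $\pi,c\in\mathbb{R}^{N^2}$ via index $(i-1)N+j$; $A_\dagger\in\mathbb{R}^{(2N-1)\times N^2}$ with $(A_\dagger\pi)_i=\sum_j\pi_{ij}$ ($i\le N-1$), $(A_\dagger\pi)_{N-1+j}=\sum_i\pi_{ij}$; $r_\dagger=(r_1,\dots,r_{N-1})$; $(\mathrm{P}_{\mathrm{OT}})$: $\min c^T\pi$ s.t. $A_\dagger\pi=(r_\dagger,s)$, $\pi\ge0$, for a cost vector $c$. A basis is $I$ with $|I|=2N-1$ and $A_{\dagger I}$ invertible; $\pi(I,v)$ has coordinates $A_{\dagger I}^{-1}v$ on $I$, zero elsewhere; $I$ is dual feasible if $A_\dagger^T(A_{\dagger I}^{-T}c_I)\le c$. $\partial H$ denotes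 the topological boundary. For $v\in\Delta_N$, $\Sigma(v)$ has diagonal entries $v_i(1-v_i)$ and off-diagonal entries $-v_iv_j$; $G^1$ is centred Gaussian on $\mathbb{R}^{N-1}$ with covariance the upper-left $(N-1)\times(N-1)$ block of $\Sigma(r)$; $G^2$ is centred Gaussian on $\mathbb{R}^N$ with covariance $\Sigma(s)$. *)

theory Defs
  imports "HOL-Probability.Probability"
begin

text \<open>Index set {1..N} is modelled by the finite type 'm option (N = CARD('m option));
  the element None plays the role of the last index N, so the entries of the reduced
  marginal r_dagger are indexed by 'm.  Vectors in R^(2N-1) are pairs (first N-1 coordinates, last N).\<close>

definition ri_simplex :: "(real^'n::finite) set" where
  "ri_simplex = {r. (\<forall>i. r $ i > 0) \<and> sum (\<lambda>i. r $ i) UNIV = 1}"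

definition rdag :: "real^('m::finite option) \<Rightarrow> real^'m" where
  "rdag r = (\<chi> i. r $ Some i)"

definition Adag :: "('m::finite option \<times> 'm option \<Rightarrow> real) \<Rightarrow> (real^'m) \<times> (real^('m option))" where
  "Adag x = ((\<chi> i. \<Sum>j\<in>UNIV. x (Some i, j)), (\<chi> j. \<Sum>i\<in>UNIV. x (i, j)))"

definition AdagT :: "(real^'m) \<times> (real^('m::finite option)) \<Rightarrow> ('m option \<times> 'm option \<Rightarrow> real)" where
  "AdagT y p = (case fst p of Some i \<Rightarrow> fst y $ i | None \<Rightarrow> 0) + snd y $ snd p"

text \<open>I is a basis: |I| = 2N-1 and the column submatrix A_dagger_I is invertible,
  i.e. the map from vectors supported on I to R^(2N-1) given by A_dagger is bijective.\<close>
definition is_basis :: "('m::finite option \<times> 'm option) set \<Rightarrow> bool" where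
  "is_basis I \<longleftrightarrow> card I = 2 * CARD('m option) - 1 \<and>
     (\<forall>v. \<exists>!x. (\<forall>p. p \<notin> I \<longrightarrow> x p = 0) \<and> Adag x = v)"

text \<open>pi(I,v): coordinates A_dagger_I^{-1} v on I, zero elsewhere.\<close>
definition pi_sol :: "('m::finite option \<times> 'm option) set \<Rightarrow> (real^'m) \<times> (real^('m option))
    \<Rightarrow> ('m option \<times> 'm option \<Rightarrow> real)" where
  "pi_sol I v = (THE x. (\<forall>p. p \<notin> I \<longrightarrow> x p = 0) \<and> Adag x = v)"

text \<open>Dual feasibility: y = A_dagger_I^{-T} c_I (the unique y with (A_dagger^T y)_p = c_p
  for p in I) satisfies A_dagger^T y \<le> c.\<close>
definition dual_feasible :: "('m::finite option \<times> 'm option \<Rightarrow> real) \<Rightarrow> ('m option \<times> 'm option) set \<Rightarrow> bool" where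
  "dual_feasible c I \<longleftrightarrow>
     (let y = (THE y. \<forall>p\<in>I. AdagT y p = c p) in \<forall>p. AdagT y p \<le> c p)"

text \<open>The cone H: for every position j whose basis element p (the j-th element of I)
  has pi_star p = 0, require [A_dagger_I^{-1} v]_j = pi(I,v)_p \<ge> 0.\<close>
definition coneH :: "('m::finite option \<times> 'm option) set \<Rightarrow> ('m option \<times> 'm option \<Rightarrow> real)
    \<Rightarrow> ((real^'m) \<times> (real^('m option))) set" where
  "coneH I pstar = {v. \<forall>p\<in>I. pstar p = 0 \<longrightarrow> pi_sol I v p \<ge> 0}"

definition SigmaM :: "real^'n \<Rightarrow> real^'n^'n::finite" where
  "SigmaM v = (\<chi> i j. if i = j then v $ i * (1 - v $ i) else - (v $ i * v $ j))"

text \<open>Centred Gaussian law with covariance matrix S (possibly degenerate), defined via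
  its characteristic function.\<close>
definition centred_gaussian :: "(real^'k::finite) measure \<Rightarrow> real^'k^'k \<Rightarrow> bool" where
  "centred_gaussian M S \<longleftrightarrow> sets M = sets borel \<and> prob_space M \<and>
     (\<forall>t. (\<integral>x. cis (t \<bullet> x) \<partial>M) = complex_of_real (exp (- (t \<bullet> (S *v t)) / 2)))"

end

theory Submission imports Defs begin


lemma pi_sol_prop:
  assumes "is_basis I"
  shows "(\<forall>p. p \<notin> I \<longrightarrow> pi_sol I v p = 0) \<and> Adag (pi_sol I v) = v"
proof -
  have "\<exists>!x. (\<forall>p. p \<notin> I \<longrightarrow> x p = 0) \<and> Adag x = v"
    using assms unfolding is_basis_def by blast
  then show ?thesis unfolding pi_sol_def by (rule theI')
qed

lemma pi_sol_unique:
  assumes "is_basis I" "\<forall>p. p \<notin> I \<longrightarrow> x p = 0"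
  shows "pi_sol I (Adag x) = x"
proof -
  have "\<exists>!y. (\<forall>p. p \<notin> I \<longrightarrow> y p = 0) \<and> Adag y = Adag x"
    using assms(1) unfolding is_basis_def by blast
  then show ?thesis using pi_sol_prop[OF assms(1), of "Adag x"] assms(2) by blast
qed

lemma Adag_lin:
  fixes f :: "'k \<Rightarrow> 'm::finite option \<times> 'm option \<Rightarrow> real"
  shows "Adag (\<lambda>q. \<Sum>k\<in>K. c k * f k q) = (\<Sum>k\<in>K. c k *\<^sub>R Adag (f k))"
proof -
  have 1: "fst (Adag (\<lambda>q. \<Sum>k\<in>K. c k * f k q)) $ i = fst (\<Sum>k\<in>K. c k *\<^sub>R Adag (f k)) $ i" for i
    by (simp add: Adag_def fst_sum sum_distrib_left sum.swap[of _ UNIV K])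
  have 2: "snd (Adag (\<lambda>q. \<Sum>k\<in>K. c k * f k q)) $ i = snd (\<Sum>k\<in>K. c k *\<^sub>R Adag (f k)) $ i" for i
    by (simp add: Adag_def snd_sum sum_distrib_left sum.swap[of _ UNIV K])
  show ?thesis using 1 2 by (simp add: prod_eq_iff vec_eq_iff)
qed

lemma vec_expand:
  fixes x :: "real^'n::finite"
  shows "(\<Sum>i\<in>UNIV. x $ i *\<^sub>R axis i 1) = x"
  by (simp add: vec_eq_iff axis_def if_distrib sum.delta cong: if_cong)

lemma pi_sol_repr:
  fixes I :: "('m::finite option \<times> 'm option) set"
  assumes "is_basis I"
  shows "pi_sol I (x, y) p = (\<Sum>i\<in>UNIV. x $ i * pi_sol I (axis i 1, 0) p)
       + (\<Sum>j\<in>UNIV. y $ j * pi_sol I (0, axis j 1) p)"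
proof -
  define z where "z = (\<lambda>q. (\<Sum>i\<in>UNIV. x $ i * pi_sol I (axis i 1, 0) q)
       + (\<Sum>j\<in>UNIV. y $ j * pi_sol I (0, axis j 1) q))"
  have s: "\<forall>q. q \<notin> I \<longrightarrow> z q = 0" using pi_sol_prop[OF assms] by (simp add: z_def)
  have "Adag z = (\<Sum>i\<in>UNIV. x $ i *\<^sub>R Adag (pi_sol I (axis i 1, 0)))
       + (\<Sum>j\<in>UNIV. y $ j *\<^sub>R Adag (pi_sol I (0, axis j 1)))"
    using Adag_lin[where c="\<lambda>i. x $ i" and K=UNIV and f="\<lambda>i. pi_sol I (axis i 1, 0)"]
      Adag_lin[where c="\<lambda>i. y $ i" and K=UNIV and f="\<lambda>i. pi_sol I (0, axis i 1)"]
    unfolding z_def by (simp add: Adag_def prod_eq_iff vec_eq_iff sum.distrib)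
  also have "\<dots> = (x, y)"
    using pi_sol_prop[OF assms]
    by (simp add: prod_eq_iff fst_sum snd_sum vec_expand)
  finally have "pi_sol I (x, y) = z" using pi_sol_unique[OF assms s] by simp
  then show ?thesis by (simp add: z_def)
qed



lemma quad_id:
  fixes w f :: "'n::finite \<Rightarrow> real"
  assumes "sum w UNIV = 1"
  shows "(\<Sum>i\<in>UNIV. w i * f i^2) - (\<Sum>i\<in>UNIV. w i * f i)^2
       = (\<Sum>i\<in>UNIV. \<Sum>j\<in>UNIV. w i * w j * (f i - f j)^2) / 2"
proof -
  have p: "\<And>i j. w i * w j * (f i - f j)^2 = (w i * f i^2) * w j + w i * (w j * f j^2) - 2 * ((w i * f i) * (w j * f j))"
    by (simp add: power2_eq_square algebra_simps)
  have "(\<Sum>i\<in>UNIV. \<Sum>j\<in>UNIV. w i * w j * (f i - f j)^2)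
      = (\<Sum>i\<in>UNIV. \<Sum>j\<in>UNIV. (w i * f i^2) * w j) + (\<Sum>i\<in>UNIV. \<Sum>j\<in>UNIV. w i * (w j * f j^2))
        - 2 * (\<Sum>i\<in>UNIV. \<Sum>j\<in>UNIV. (w i * f i) * (w j * f j))"
    unfolding p by (simp add: sum_subtractf sum.distrib sum_distrib_left)
  also have "\<dots> = (\<Sum>i\<in>UNIV. w i * f i^2) * sum w UNIV + sum w UNIV * (\<Sum>j\<in>UNIV. w j * f j^2)
        - 2 * ((\<Sum>i\<in>UNIV. w i * f i) * (\<Sum>j\<in>UNIV. w j * f j))"
    by (simp only: sum_product)
  finally show ?thesis using assms by (simp add: power2_eq_square)
qed

lemma quad_nonneg:
  fixes w f :: "'n::finite \<Rightarrow> real"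
  assumes "sum w UNIV = 1" "\<And>i. w i \<ge> 0"
  shows "(\<Sum>i\<in>UNIV. w i * f i^2) - (\<Sum>i\<in>UNIV. w i * f i)^2 \<ge> 0"
  unfolding quad_id[OF assms(1)] using assms(2)
  by (intro divide_nonneg_pos sum_nonneg mult_nonneg_nonneg) auto

lemma quad_zero:
  fixes w f :: "'n::finite \<Rightarrow> real"
  assumes "sum w UNIV = 1" "\<And>i. w i > 0"
    and "(\<Sum>i\<in>UNIV. w i * f i^2) - (\<Sum>i\<in>UNIV. w i * f i)^2 = 0"
  shows "f i = f j"
proof -
  have nn: "\<And>i j. w i * w j * (f i - f j)^2 \<ge> 0" using assms(2) by (simp add: less_imp_le)
  have "(\<Sum>i\<in>UNIV. \<Sum>j\<in>UNIV. w i * w j * (f i - f j)^2) = 0"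
    using assms(3) unfolding quad_id[OF assms(1)] by simp
  then have "\<forall>i\<in>UNIV. (\<Sum>j\<in>UNIV. w i * w j * (f i - f j)^2) = 0"
    by (subst (asm) sum_nonneg_eq_0_iff) (auto intro!: sum_nonneg nn)
  then have "(\<Sum>j\<in>UNIV. w i * w j * (f i - f j)^2) = 0" by blast
  then have "w i * w j * (f i - f j)^2 = 0" using nn by (subst (asm) sum_nonneg_eq_0_iff) auto
  moreover have "w i \<noteq> 0" "w j \<noteq> 0" using assms(2) by (metis less_irrefl)+
  ultimately show ?thesis by simp
qed

lemma SigmaM_quad:
  fixes v t :: "real^'n::finite"
  shows "t \<bullet> (SigmaM v *v t) = (\<Sum>i\<in>UNIV. v$i * (t$i)^2) - (\<Sum>i\<in>UNIV. v$i * t$i)^2"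
proof -
  define C where "C = (\<Sum>j\<in>UNIV. v$j * t$j)"
  have e: "(SigmaM v *v t) $ i = v$i * t$i - v$i * C" for i
  proof -
    have "(SigmaM v *v t)$i = (\<Sum>j\<in>UNIV. (if i = j then v$i * t$j else 0) - v$i * (v$j * t$j))"
      unfolding matrix_vector_mult_def SigmaM_def by (simp; intro sum.cong; auto simp: algebra_simps)
    also have "\<dots> = (\<Sum>j\<in>UNIV. (if i = j then v$i * t$j else 0)) - (\<Sum>j\<in>UNIV. v$i * (v$j * t$j))"
      by (simp add: sum_subtractf)
    also have "\<dots> = v$i * t$i - v$i * C"
      by (simp add: C_def sum_distrib_left)
    finally show ?thesis .
  qed
  have "t \<bullet> (SigmaM v *v t) = (\<Sum>i\<in>UNIV. v$i * (t$i)^2 - (v$i * t$i) * C)"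
    unfolding inner_vec_def e by (intro sum.cong) (auto simp: power2_eq_square algebra_simps)
  also have "\<dots> = (\<Sum>i\<in>UNIV. v$i * (t$i)^2) - (\<Sum>i\<in>UNIV. v$i * t$i) * C"
    by (simp add: sum_subtractf sum_distrib_right)
  finally show ?thesis by (simp add: C_def power2_eq_square)
qed

lemma sum_option:
  fixes g :: "'m::finite option \<Rightarrow> 'a::comm_monoid_add"
  shows "(\<Sum>k\<in>UNIV. g k) = g None + (\<Sum>i\<in>UNIV. g (Some i))"
proof -
  have "(UNIV :: 'm option set) = insert None (range Some)" by (rule UNIV_option_conv)
  then have "sum g UNIV = sum g (insert None (range Some))" by simp
  also have "\<dots> = g None + sum g (range Some)" by (subst sum.insert) auto
  also have "sum g (range Some) = (\<Sum>i\<in>UNIV. g (Some i))" by (subst sum.reindex) (auto simp: inj_on_def)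
  finally show ?thesis .
qed

lemma block_quad:
  fixes r :: "real^('m::finite option)" and a :: "real^'m"
  defines "f \<equiv> (\<lambda>k. case k of None \<Rightarrow> 0 | Some i \<Rightarrow> a $ i)"
  shows "a \<bullet> ((\<chi> i j. SigmaM r $ Some i $ Some j) *v a)
     = (\<Sum>k\<in>UNIV. r$k * (f k)^2) - (\<Sum>k\<in>UNIV. r$k * f k)^2"
proof -
  have "(\<chi> i j. SigmaM r $ Some i $ Some j) = SigmaM (rdag r)"
    by (simp add: vec_eq_iff SigmaM_def rdag_def)
  then show ?thesis by (simp add: SigmaM_quad sum_option f_def rdag_def)
qed



lemma frontier_sub:
  fixes L :: "'p \<Rightarrow> 'v::topological_space \<Rightarrow> real"
  assumes "finite I" "\<And>p. p \<in> I \<Longrightarrow> continuous_on UNIV (L p)"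
    and "v \<in> frontier {w. \<forall>p\<in>I. Q p \<longrightarrow> L p w \<ge> 0}"
  shows "\<exists>p\<in>I. L p v = 0"
proof (rule ccontr)
  assume nz: "\<not> (\<exists>p\<in>I. L p v = 0)"
  define H where "H = {w. \<forall>p\<in>I. Q p \<longrightarrow> L p w \<ge> 0}"
  have vc: "v \<in> closure H" and vi: "v \<notin> interior H" using assms(3) unfolding H_def frontier_def by auto
  show False
  proof (cases "\<exists>p\<in>I. Q p \<and> L p v < 0")
    case True
    then obtain p where p: "p\<in>I" "Q p" "L p v < 0" by blast
    have o: "open {w. L p w < 0}"
      using assms(2)[OF p(1)] continuous_on_const by (rule open_Collect_less)
    have d: "{w. L p w < 0} \<inter> H = {}"
    proof -
      { fix w assume w: "L p w < 0" "w \<in> H"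
        then have "L p w \<ge> 0" using p(1,2) unfolding H_def by blast
        with w(1) have False by linarith }
      then show ?thesis by blast
    qed
    have "{w. L p w < 0} \<inter> closure H = {}"
      using open_Int_closure_eq_empty[OF o] d by blast
    then show False using p(3) vc by blast
  next
    case False
    define U where "U = (\<Inter>p\<in>{p\<in>I. Q p}. {w. 0 < L p w})"
    have "open U" unfolding U_def
    proof (rule open_INT)
      show "finite {p \<in> I. Q p}" using assms(1) by simp
      show "\<forall>p\<in>{p \<in> I. Q p}. open {w. 0 < L p w}"
      proof
        fix p assume "p \<in> {p \<in> I. Q p}"
        then have "continuous_on UNIV (L p)" using assms(2) by blast
        with continuous_on_const show "open {w. 0 < L p w}" by (rule open_Collect_less)
      qed
    qed
    moreover have "v \<in> U"
    proof -
      { fix p assume "p \<in> I" "Q p"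
        then have "L p v \<noteq> 0" "\<not> L p v < 0" using False nz by blast+
        then have "0 < L p v" by linarith }
      then show ?thesis unfolding U_def by blast
    qed
    moreover have "U \<subseteq> H"
    proof
      fix w assume "w \<in> U"
      then have "\<forall>p\<in>I. Q p \<longrightarrow> 0 < L p w" unfolding U_def by blast
      then show "w \<in> H" unfolding H_def by (simp add: less_imp_le)
    qed
    ultimately have "v \<in> interior H" by (rule interiorI)
    then show False using vi by blast
  qed
qed

lemma indep_rect:
  fixes G1 :: "'w \<Rightarrow> 'a::topological_space" and G2 :: "'w \<Rightarrow> 'b::topological_space"
    and h1 :: "'a \<Rightarrow> real" and h2 :: "'b \<Rightarrow> real"
  assumes P: "prob_space P" and m: "G1 \<in> borel_measurable P" "G2 \<in> borel_measurable P"
  and hm: "h1 \<in> borel_measurable borel" "h2 \<in> borel_measurable borel"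
  and h: "\<forall>A\<in>sets (borel::'a measure). \<forall>B\<in>sets (borel::'b measure).
           measure P {\<omega>\<in>space P. G1 \<omega> \<in> A \<and> G2 \<omega> \<in> B}
             = measure P {\<omega>\<in>space P. G1 \<omega> \<in> A} * measure P {\<omega>\<in>space P. G2 \<omega> \<in> B}"
  shows "prob_space.indep_var P borel (\<lambda>\<omega>. h1 (G1 \<omega>)) borel (\<lambda>\<omega>. h2 (G2 \<omega>))"
proof -
  interpret prob_space P by fact
  define X1 where "X1 = (\<lambda>\<omega>. h1 (G1 \<omega>))"
  define X2 where "X2 = (\<lambda>\<omega>. h2 (G2 \<omega>))"
  have mX: "X1 \<in> borel_measurable P" "X2 \<in> borel_measurable P"
    unfolding X1_def X2_def using measurable_compose[OF m(1) hm(1)] measurable_compose[OF m(2) hm(2)]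
    by (simp_all add: comp_def)
  have XY: "(\<lambda>x. (X1 x, X2 x)) \<in> measurable P (borel \<Otimes>\<^sub>M borel)" using mX by (rule measurable_Pair)
  interpret X: prob_space "distr P borel X1" by (rule prob_space_distr) (rule mX)
  interpret Y: prob_space "distr P borel X2" by (rule prob_space_distr) (rule mX)
  have "distr P borel X1 \<Otimes>\<^sub>M distr P borel X2 = distr P (borel \<Otimes>\<^sub>M borel) (\<lambda>x. (X1 x, X2 x))"
  proof (rule pair_measure_eqI)
    show "sigma_finite_measure (distr P borel X1)"
      by (rule prob_space_imp_sigma_finite) (rule X.prob_space_axioms)
    show "sigma_finite_measure (distr P borel X2)"
      by (rule prob_space_imp_sigma_finite) (rule Y.prob_space_axioms)
    show "sets (distr P borel X1 \<Otimes>\<^sub>M distr P borel X2) = sets (distr P (borel \<Otimes>\<^sub>M borel) (\<lambda>x. (X1 x, X2 x)))"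
      by (simp add: sets_pair_measure_cong[OF sets_distr sets_distr])
    fix A B assume A: "A \<in> sets (distr P borel X1)" and B: "B \<in> sets (distr P borel X2)"
    then have A': "A \<in> sets borel" "B \<in> sets borel" by auto
    have hA: "h1 -` A \<in> sets borel" using measurable_sets[OF hm(1) A'(1)] by simp
    have hB: "h2 -` B \<in> sets borel" using measurable_sets[OF hm(2) A'(2)] by simp
    have s1: "{\<omega>\<in>space P. G1 \<omega> \<in> h1 -` A} = X1 -` A \<inter> space P" by (auto simp: X1_def)
    have s2: "{\<omega>\<in>space P. G2 \<omega> \<in> h2 -` B} = X2 -` B \<inter> space P" by (auto simp: X2_def)
    have "emeasure (distr P (borel \<Otimes>\<^sub>M borel) (\<lambda>x. (X1 x, X2 x))) (A \<times> B)
        = emeasure P ((\<lambda>x. (X1 x, X2 x)) -` (A \<times> B) \<inter> space P)"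
      using A' by (intro emeasure_distr[OF XY]) auto
    also have "\<dots> = emeasure P {\<omega>\<in>space P. G1 \<omega> \<in> h1 -` A \<and> G2 \<omega> \<in> h2 -` B}"
      by (intro arg_cong[where f="emeasure P"]) (auto simp: X1_def X2_def)
    also have "\<dots> = ennreal (measure P {\<omega>\<in>space P. G1 \<omega> \<in> h1 -` A} * measure P {\<omega>\<in>space P. G2 \<omega> \<in> h2 -` B})"
      using h[rule_format, OF hA hB] by (simp add: emeasure_eq_measure)
    also have "\<dots> = emeasure P (X1 -` A \<inter> space P) * emeasure P (X2 -` B \<inter> space P)"
      unfolding s1 s2 by (simp add: emeasure_eq_measure ennreal_mult)
    also have "\<dots> = emeasure (distr P borel X1) A * emeasure (distr P borel X2) B"
      using A' mX by (simp add: emeasure_distr)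
    finally show "emeasure (distr P borel X1) A * emeasure (distr P borel X2) B
        = emeasure (distr P (borel \<Otimes>\<^sub>M borel) (\<lambda>x. (X1 x, X2 x))) (A \<times> B)" by simp
  qed
  then have "indep_var borel X1 borel X2" using mX by (simp add: indep_var_distribution_eq)
  then show ?thesis by (simp add: X1_def X2_def)
qed



lemma meas_inner:
  fixes G :: "'w \<Rightarrow> real^'k::finite"
  assumes "G \<in> borel_measurable P"
  shows "(\<lambda>\<omega>. c \<bullet> G \<omega>) \<in> borel_measurable P"
  using assms by (intro borel_measurable_inner borel_measurable_const)

lemma gauss_char:
  fixes G :: "'w \<Rightarrow> real^'k::finite"
  assumes P: "prob_space P" and m: "G \<in> borel_measurable P"
    and g: "centred_gaussian (distr P borel G) S"
  shows "char (distr P borel (\<lambda>\<omega>. c \<bullet> G \<omega>)) t = complex_of_real (exp (- (t^2 * (c \<bullet> (S *v c))) / 2))"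
proof -
  have gg: "(CLINT x|distr P borel G. cis (u \<bullet> x)) = complex_of_real (exp (- (u \<bullet> (S *v u)) / 2))" for u
    using g unfolding centred_gaussian_def by blast
  have mi: "(\<lambda>\<omega>. c \<bullet> G \<omega>) \<in> borel_measurable P" using m by (rule meas_inner)
  have "char (distr P borel (\<lambda>\<omega>. c \<bullet> G \<omega>)) t = (CLINT x|distr P borel (\<lambda>\<omega>. c \<bullet> G \<omega>). iexp (t * x))"
    by (simp add: char_def)
  also have "\<dots> = (CLINT \<omega>|P. iexp (t * (c \<bullet> G \<omega>)))"
    by (rule integral_distr[OF mi]) measurable
  also have "\<dots> = (CLINT x|distr P borel G. cis ((t *\<^sub>R c) \<bullet> x))"
    by (subst integral_distr[OF m]) (simp_all add: cis_conv_exp)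
  also have "\<dots> = complex_of_real (exp (- ((t *\<^sub>R c) \<bullet> (S *v (t *\<^sub>R c))) / 2))"
    by (rule gg)
  also have "(t *\<^sub>R c) \<bullet> (S *v (t *\<^sub>R c)) = t^2 * (c \<bullet> (S *v c))"
    by (simp add: matrix_vector_mult_scaleR power2_eq_square)
  finally show ?thesis .
qed

lemma normal_point:
  fixes X :: "'w \<Rightarrow> real"
  assumes P: "prob_space P" and m: "X \<in> borel_measurable P"
    and c: "\<And>t. char (distr P borel X) t = complex_of_real (exp (- (t^2) / 2))"
  shows "measure P {\<omega>\<in>space P. X \<omega> = 0} = 0"
proof -
  interpret prob_space P by fact
  have "distr P borel X = std_normal_distribution"
    by (rule Levy_uniqueness) (auto simp: real_distribution_distr m real_dist_normal_dist char_std_normal_distribution c)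
  moreover have "measure (distr P borel X) {0} = measure P {\<omega>\<in>space P. X \<omega> = 0}"
    by (subst measure_distr[OF m]) (auto intro!: arg_cong[where f="measure P"])
  moreover have "emeasure std_normal_distribution {0} = 0"
    by (subst emeasure_density) (auto simp: nn_integral_indicator_singleton emeasure_lborel_singleton)
  ultimately show ?thesis by (simp add: measure_def)
qed



lemma delta_sum: "(\<Sum>i\<in>(UNIV::'a::finite set). (if (i, j) = q then 1 else 0::real)) = (if j = snd q then 1 else 0)"
  by (cases q, cases "j = snd q") (auto simp: sum.delta)

lemma key_null:
  fixes r s :: "real^('m::finite option)"
    and I :: "('m option \<times> 'm option) set"
    and P :: "'w measure"
    and G1 :: "'w \<Rightarrow> real^'m"
    and G2 :: "'w \<Rightarrow> real^('m option)"
    and a :: "real^'m" and b :: "real^('m option)"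
  assumes r: "r \<in> ri_simplex" and s: "s \<in> ri_simplex"
    and B: "is_basis I" and pI: "p \<in> I" and q: "q \<in> I" "q \<noteq> p"
    and ell: "\<And>x y. pi_sol I (x, y) p = a \<bullet> x + b \<bullet> y"
    and P: "prob_space P"
    and m1: "G1 \<in> borel_measurable P" and m2: "G2 \<in> borel_measurable P"
    and h: "\<forall>A\<in>sets (borel :: (real^'m) measure). \<forall>B\<in>sets (borel :: (real^('m option)) measure).
           measure P {\<omega>\<in>space P. G1 \<omega> \<in> A \<and> G2 \<omega> \<in> B}
             = measure P {\<omega>\<in>space P. G1 \<omega> \<in> A} * measure P {\<omega>\<in>space P. G2 \<omega> \<in> B}"
    and g1: "centred_gaussian (distr P borel G1) (\<chi> i j. SigmaM r $ Some i $ Some j)"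
    and g2: "centred_gaussian (distr P borel G2) (SigmaM s)"
  shows "measure P {\<omega>\<in>space P. a \<bullet> G1 \<omega> + b \<bullet> G2 \<omega> = 0} = 0"
proof -
  interpret prob_space P by fact
  define S1 where "S1 = (\<chi> i j. SigmaM r $ Some i $ Some j)"
  define f where "f = (\<lambda>k. case k of None \<Rightarrow> 0 | Some i \<Rightarrow> a $ i)"
  define \<sigma>1 where "\<sigma>1 = a \<bullet> (S1 *v a)"
  define \<sigma>2 where "\<sigma>2 = b \<bullet> (SigmaM s *v b)"
  have rw: "sum (\<lambda>k. r $ k) UNIV = 1" "\<And>k. r $ k > 0" using r by (auto simp: ri_simplex_def)
  have sw: "sum (\<lambda>k. s $ k) UNIV = 1" "\<And>k. s $ k > 0" using s by (auto simp: ri_simplex_def)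
  have q1: "\<sigma>1 = (\<Sum>k\<in>UNIV. r$k * (f k)^2) - (\<Sum>k\<in>UNIV. r$k * f k)^2"
    unfolding \<sigma>1_def S1_def f_def by (rule block_quad)
  have q2: "\<sigma>2 = (\<Sum>k\<in>UNIV. s$k * (b$k)^2) - (\<Sum>k\<in>UNIV. s$k * b$k)^2"
    unfolding \<sigma>2_def by (rule SigmaM_quad)
  have n1: "\<sigma>1 \<ge> 0" unfolding q1 using rw by (intro quad_nonneg) (auto simp: less_imp_le)
  have n2: "\<sigma>2 \<ge> 0" unfolding q2 using sw by (intro quad_nonneg) (auto simp: less_imp_le)
  have pos: "\<sigma>1 + \<sigma>2 > 0"
  proof (rule ccontr)
    assume "\<not> \<sigma>1 + \<sigma>2 > 0"
    then have z1: "\<sigma>1 = 0" and z2: "\<sigma>2 = 0" using n1 n2 by linarith+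
    have a0: "a = 0"
    proof -
      { fix i
        have "f (Some i) = f None"
          using quad_zero[of "\<lambda>k. r $ k" f, OF rw(1) rw(2)] z1 q1 by simp
        then have "a $ i = 0" by (simp add: f_def) }
      then show ?thesis by (simp add: vec_eq_iff)
    qed
    define \<beta> where "\<beta> = b $ None"
    have bc: "\<And>j. b $ j = \<beta>"
      using quad_zero[of "\<lambda>k. s $ k" "\<lambda>k. b $ k", OF sw(1) sw(2)] z2 q2 unfolding \<beta>_def by simp
    have val: "x p = \<beta> * (\<Sum>j\<in>UNIV. \<Sum>i\<in>UNIV. x (i, j))" if "\<forall>p'. p' \<notin> I \<longrightarrow> x p' = 0" for x
    proof -
      have "x p = pi_sol I (Adag x) p" using pi_sol_unique[OF B that] by simp
      also have "\<dots> = pi_sol I (fst (Adag x), snd (Adag x)) p" by simp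
      also have "\<dots> = b \<bullet> snd (Adag x)" unfolding ell a0 by simp
      also have "\<dots> = \<beta> * (\<Sum>j\<in>UNIV. \<Sum>i\<in>UNIV. x (i, j))"
        by (simp add: inner_vec_def bc Adag_def sum_distrib_left)
      finally show ?thesis .
    qed
    have "1 = \<beta>"
      using val[of "\<lambda>p'. if p' = p then 1 else 0"] pI by (simp add: delta_sum)
    moreover have "0 = \<beta>"
      using val[of "\<lambda>p'. if p' = q then 1 else 0"] q by (simp add: delta_sum)
    ultimately show False by simp
  qed
  define k where "k = 1 / sqrt (\<sigma>1 + \<sigma>2)"
  have kpos: "k > 0" using pos by (simp add: k_def)
  have kk: "k^2 * (\<sigma>1 + \<sigma>2) = 1" using pos by (simp add: k_def power_divide)
  define X1 where "X1 = (\<lambda>\<omega>. (k *\<^sub>R a) \<bullet> G1 \<omega>)"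
  define X2 where "X2 = (\<lambda>\<omega>. (k *\<^sub>R b) \<bullet> G2 \<omega>)"
  have mX1: "X1 \<in> borel_measurable P" unfolding X1_def using m1 by (rule meas_inner)
  have mX2: "X2 \<in> borel_measurable P" unfolding X2_def using m2 by (rule meas_inner)
  have ind2: "indep_var borel X1 borel X2"
  proof -
    have "(\<lambda>x::real^'m. (k *\<^sub>R a) \<bullet> x) \<in> borel_measurable borel"
      using meas_inner[of "\<lambda>x. x" borel] by simp
    moreover have "(\<lambda>x::real^'m option. (k *\<^sub>R b) \<bullet> x) \<in> borel_measurable borel"
      using meas_inner[of "\<lambda>x. x" borel] by simp
    ultimately show ?thesis
      using indep_rect[OF P m1 m2 _ _ h] unfolding X1_def X2_def by blast
  qed
  have c1: "char (distr P borel X1) t = complex_of_real (exp (- (t^2 * (k^2 * \<sigma>1)) / 2))" for t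
    unfolding X1_def using gauss_char[OF P m1 g1, of "k *\<^sub>R a" t]
    by (simp add: \<sigma>1_def S1_def matrix_vector_mult_scaleR power2_eq_square)
  have c2: "char (distr P borel X2) t = complex_of_real (exp (- (t^2 * (k^2 * \<sigma>2)) / 2))" for t
    unfolding X2_def using gauss_char[OF P m2 g2, of "k *\<^sub>R b" t]
    by (simp add: \<sigma>2_def matrix_vector_mult_scaleR power2_eq_square)
  have cX: "char (distr P borel (\<lambda>\<omega>. X1 \<omega> + X2 \<omega>)) t = complex_of_real (exp (- (t^2) / 2))" for t
  proof -
    have "char (distr P borel (\<lambda>\<omega>. X1 \<omega> + X2 \<omega>)) t = char (distr P borel X1) t * char (distr P borel X2) t"
      by (rule char_distr_add[OF ind2])
    also have "\<dots> = complex_of_real (exp (- (t^2 * (k^2 * \<sigma>1)) / 2 + - (t^2 * (k^2 * \<sigma>2)) / 2))"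
      unfolding c1 c2 exp_add by simp
    also have "- (t^2 * (k^2 * \<sigma>1)) / 2 + - (t^2 * (k^2 * \<sigma>2)) / 2 = - (t^2 * (k^2 * (\<sigma>1 + \<sigma>2))) / 2"
      by (simp add: algebra_simps)
    finally show ?thesis unfolding kk by simp
  qed
  have "measure P {\<omega>\<in>space P. X1 \<omega> + X2 \<omega> = 0} = 0"
    using mX1 mX2 by (intro normal_point[OF P _ cX]) measurable
  moreover have "{\<omega>\<in>space P. X1 \<omega> + X2 \<omega> = 0} = {\<omega>\<in>space P. a \<bullet> G1 \<omega> + b \<bullet> G2 \<omega> = 0}"
    using kpos by (auto simp: X1_def X2_def simp flip: distrib_left)
  ultimately show ?thesis by simp
qed



lemma card_opt2: "CARD('m::finite option) \<ge> 2"
proof -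
  have "card {None, Some (undefined::'m)} \<le> CARD('m option)" by (rule card_mono) auto
  then show ?thesis by simp
qed

theorem lemmaC1:
  fixes r s :: "real^('m::finite option)"
    and c :: "'m option \<times> 'm option \<Rightarrow> real"
    and I :: "('m option \<times> 'm option) set"
    and P :: "'w measure"
    and G1 :: "'w \<Rightarrow> real^'m"
    and G2 :: "'w \<Rightarrow> real^('m option)"
  assumes "r \<in> ri_simplex" and "s \<in> ri_simplex"
    and "is_basis I" and "dual_feasible c I"
    and "\<forall>p. pi_sol I (rdag r, s) p \<ge> 0"
    and "prob_space P"
    and "G1 \<in> borel_measurable P" and "G2 \<in> borel_measurable P"
    and "\<forall>A\<in>sets (borel :: (real^'m) measure). \<forall>B\<in>sets (borel :: (real^('m option)) measure).
           measure P {\<omega>\<in>space P. G1 \<omega> \<in> A \<and> G2 \<omega> \<in> B}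
             = measure P {\<omega>\<in>space P. G1 \<omega> \<in> A} * measure P {\<omega>\<in>space P. G2 \<omega> \<in> B}"
    and "centred_gaussian (distr P borel G1) (\<chi> i j. SigmaM r $ Some i $ Some j)"
    and "centred_gaussian (distr P borel G2) (SigmaM s)"
  shows "measure P {\<omega> \<in> space P. (G1 \<omega>, G2 \<omega>) \<in> frontier (coneH I (pi_sol I (rdag r, s)))} = 0"
proof -
  interpret prob_space P by fact
  define pstar where "pstar = pi_sol I (rdag r, s)"
  define a where "a = (\<lambda>p. \<chi> i. pi_sol I (axis i 1, 0) p)"
  define b where "b = (\<lambda>p. \<chi> j. pi_sol I (0, axis j 1) p)"
  have ell0: "pi_sol I (x, y) p = x \<bullet> a p + y \<bullet> b p" for x y p
  proof -
    have "pi_sol I (x, y) p = (\<Sum>i\<in>UNIV. x $ i * pi_sol I (axis i 1, 0) p)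
       + (\<Sum>j\<in>UNIV. y $ j * pi_sol I (0, axis j 1) p)"
      by (rule pi_sol_repr[OF assms(3)])
    also have "\<dots> = x \<bullet> a p + y \<bullet> b p" by (simp add: a_def b_def inner_vec_def)
    finally show ?thesis .
  qed
  have ell: "\<And>x y p. pi_sol I (x, y) p = a p \<bullet> x + b p \<bullet> y"
  proof -
    fix x y p
    show "pi_sol I (x, y) p = a p \<bullet> x + b p \<bullet> y"
      using ell0[of x y p] inner_commute[of x "a p"] inner_commute[of y "b p"] by (simp only:)
  qed
  have cardI: "card I = 2 * CARD('m option) - 1" using assms(3) by (simp add: is_basis_def)
  then have c3: "card I \<ge> 3" using card_opt2[where 'm='m] by linarith
  then have finI: "finite I" by (intro card_ge_0_finite) linarith
  have two: "\<exists>q\<in>I. q \<noteq> p" for p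
  proof (rule ccontr)
    assume "\<not> (\<exists>q\<in>I. q \<noteq> p)"
    then have "I \<subseteq> {p}" by blast
    then have "card I \<le> card {p}" by (rule card_mono[rotated]) simp
    then show False using c3 by simp
  qed
  define E where "E = (\<lambda>p. {\<omega>\<in>space P. a p \<bullet> G1 \<omega> + b p \<bullet> G2 \<omega> = 0})"
  have null: "measure P (E p) = 0" if pI: "p \<in> I" for p
  proof -
    obtain q where q: "q \<in> I" "q \<noteq> p" using two by blast
    show ?thesis unfolding E_def
      by (rule key_null[OF assms(1,2,3) pI q ell assms(6,7,8,9,10,11)])
  qed
  have ev: "E p \<in> sets P" for p
  proof -
    have mf: "(\<lambda>\<omega>. a p \<bullet> G1 \<omega> + b p \<bullet> G2 \<omega>) \<in> borel_measurable P"
      using meas_inner[OF assms(7)] meas_inner[OF assms(8)] by (rule borel_measurable_add)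
    have "(\<lambda>\<omega>. a p \<bullet> G1 \<omega> + b p \<bullet> G2 \<omega>) -` {0} \<inter> space P \<in> sets P"
      by (rule measurable_sets[OF mf]) simp
    moreover have "(\<lambda>\<omega>. a p \<bullet> G1 \<omega> + b p \<bullet> G2 \<omega>) -` {0} \<inter> space P = E p"
      unfolding E_def by auto
    ultimately show ?thesis by simp
  qed
  have sub: "{\<omega> \<in> space P. (G1 \<omega>, G2 \<omega>) \<in> frontier (coneH I pstar)} \<subseteq> (\<Union>p\<in>I. E p)"
  proof
    fix \<omega> assume "\<omega> \<in> {\<omega> \<in> space P. (G1 \<omega>, G2 \<omega>) \<in> frontier (coneH I pstar)}"
    then have om: "\<omega> \<in> space P"
      and fr: "(G1 \<omega>, G2 \<omega>) \<in> frontier {w. \<forall>p\<in>I. pstar p = 0 \<longrightarrow> pi_sol I w p \<ge> 0}"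
      by (auto simp: coneH_def)
    have cont: "continuous_on UNIV (\<lambda>w. pi_sol I w p)" if "p \<in> I" for p
    proof -
      have eq: "(\<lambda>w. pi_sol I w p) = (\<lambda>w. a p \<bullet> fst w + b p \<bullet> snd w)"
      proof
        fix w :: "(real^'m) \<times> (real^'m option)"
        show "pi_sol I w p = a p \<bullet> fst w + b p \<bullet> snd w"
          using ell[of "fst w" "snd w" p] by simp
      qed
      show ?thesis unfolding eq by (intro continuous_intros)
    qed
    obtain p where "p \<in> I" "pi_sol I (G1 \<omega>, G2 \<omega>) p = 0"
      using frontier_sub[where L="\<lambda>p w. pi_sol I w p", OF finI cont fr] by blast
    then show "\<omega> \<in> (\<Union>p\<in>I. E p)" using om ell unfolding E_def by auto
  qed
  have "measure P (\<Union>p\<in>I. E p) \<le> (\<Sum>p\<in>I. measure P (E p))"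
    by (rule measure_UNION_le[OF finI ev])
  also have "\<dots> = 0" using null by simp
  finally have u0: "measure P (\<Union>p\<in>I. E p) \<le> 0" .
  have "(\<Union>p\<in>I. E p) \<in> sets P" using finI ev by blast
  then have "measure P {\<omega> \<in> space P. (G1 \<omega>, G2 \<omega>) \<in> frontier (coneH I pstar)} \<le> measure P (\<Union>p\<in>I. E p)"
    using sub by (rule finite_measure_mono[rotated])
  then have "measure P {\<omega> \<in> space P. (G1 \<omega>, G2 \<omega>) \<in> frontier (coneH I pstar)} \<le> 0"
    using u0 by linarith
  moreover have "measure P {\<omega> \<in> space P. (G1 \<omega>, G2 \<omega>) \<in> frontier (coneH I pstar)} \<ge> 0"
    by (rule measure_nonneg)
  ultimately show ?thesis unfolding pstar_def by linarith
qed


end
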